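(* Let $G$ be a graph, $v$ a vertex, and $T$ a 4-proper $(d,3)$-tree in $G$ rooted at $v$. Suppose every vertex of $G$ is chosen as a seed independently with probability $p=4d^{-7/4}$, and threshold-2 bootstrap percolation is run on $G$. Then, for $d$ sufficiently large, $v$ is activated with probability at least $1/2$.
   Context: Given a graph $G$ of minimum degree at least $d+1$ and a vertex $v$, a $(d,k)$-tree rooted at $v$ is defined inductively: a $(d,0)$-tree is $v$ alone; a $(d,1)$-tree has root $v$ and as leaves $d$ distinct neighbors of $v$; a $(d,k+1)$-tree is obtained from a $(d,k)$-tree by giving each leaf $d$ distinct children chosen among its neighbors in $G$ other than its parent in the tree. (The same vertex of $G$ may appear at several nodes of the tree.) A $(d,k)$-tree is 4-proper if the subgraph of $G$ formed by the edges of $G$ corresponding to tree edges contains no 4-cycle; in particular every $(d,k)$-tree in a graph with no 4-cycles is 4-proper. Bootstrap percolation with threshold 2: given seeds $A_0$, $A_i=A_{i-1}\cup\{u:|N(u)\cap A_{i-1}|\ge 2\}$, where $N(u)$ is the neighborhood of $u$; $u$ is activated if $u\in\bigcup_iA_i$. *)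

theory Defs
  imports Complex_Main
begin

definition fin_graph :: "nat set \<Rightarrow> (nat \<Rightarrow> nat \<Rightarrow> bool) \<Rightarrow> bool" where
  "fin_graph V E \<longleftrightarrow> finite V \<and> (\<forall>u w. E u w \<longrightarrow> u \<in> V \<and> w \<in> V)
     \<and> (\<forall>u w. E u w \<longrightarrow> E w u) \<and> (\<forall>u. \<not> E u u)"

definition nbhd :: "(nat \<Rightarrow> nat \<Rightarrow> bool) \<Rightarrow> nat \<Rightarrow> nat set" where
  "nbhd E u = {w. E u w}"

text \<open>Tree nodes are words over {0..<d} of length at most k; f labels each
  node by a vertex of G. Node s@[i] is the i-th child of node s.\<close>
definition tree_node :: "nat \<Rightarrow> nat \<Rightarrow> nat list \<Rightarrow> bool" where
  "tree_node d k s \<longleftrightarrow> length s \<le> k \<and> set s \<subseteq> {..<d}"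

definition dk_tree :: "(nat \<Rightarrow> nat \<Rightarrow> bool) \<Rightarrow> nat \<Rightarrow> nat \<Rightarrow> nat \<Rightarrow> (nat list \<Rightarrow> nat) \<Rightarrow> bool" where
  "dk_tree E d k v f \<longleftrightarrow> f [] = v \<and>
     (\<forall>s. length s < k \<and> set s \<subseteq> {..<d} \<longrightarrow>
        inj_on (\<lambda>i. f (s @ [i])) {..<d} \<and>
        (\<forall>i<d. E (f s) (f (s @ [i])) \<and> (s \<noteq> [] \<longrightarrow> f (s @ [i]) \<noteq> f (butlast s))))"

definition tree_edges :: "nat \<Rightarrow> nat \<Rightarrow> (nat list \<Rightarrow> nat) \<Rightarrow> nat set set" where
  "tree_edges d k f = {{f s, f (s @ [i])} | s i. length s < k \<and> set s \<subseteq> {..<d} \<and> i < d}"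

definition four_proper :: "nat \<Rightarrow> nat \<Rightarrow> (nat list \<Rightarrow> nat) \<Rightarrow> bool" where
  "four_proper d k f \<longleftrightarrow> \<not> (\<exists>a b c e. distinct [a, b, c, e] \<and>
      {a, b} \<in> tree_edges d k f \<and> {b, c} \<in> tree_edges d k f \<and>
      {c, e} \<in> tree_edges d k f \<and> {e, a} \<in> tree_edges d k f)"

fun boot :: "nat set \<Rightarrow> (nat \<Rightarrow> nat \<Rightarrow> bool) \<Rightarrow> nat set \<Rightarrow> nat \<Rightarrow> nat set" where
  "boot V E A 0 = A"
| "boot V E A (Suc i) = boot V E A i \<union> {u \<in> V. card (nbhd E u \<inter> boot V E A i) \<ge> 2}"

definition activated :: "nat set \<Rightarrow> (nat \<Rightarrow> nat \<Rightarrow> bool) \<Rightarrow> nat set \<Rightarrow> nat \<Rightarrow> bool" where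
  "activated V E A u \<longleftrightarrow> u \<in> (\<Union>i. boot V E A i)"

text \<open>Probability that v is activated when every vertex of V is a seed independently
  with probability p (product Bernoulli measure on the finite set V).\<close>
definition prob_activated :: "nat set \<Rightarrow> (nat \<Rightarrow> nat \<Rightarrow> bool) \<Rightarrow> real \<Rightarrow> nat \<Rightarrow> real" where
  "prob_activated V E p v =
     (\<Sum>S\<in>Pow V. if activated V E S v then p ^ card S * (1 - p) ^ (card V - card S) else 0)"

end

theory Submission
  imports Defs
begin


definition wt :: "nat set \<Rightarrow> real \<Rightarrow> nat set \<Rightarrow> real" where
  "wt V p S = p ^ card S * (1 - p) ^ (card V - card S)"

lemma wt_nonneg: "0 \<le> p \<Longrightarrow> p \<le> 1 \<Longrightarrow> 0 \<le> wt V p S"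
  by (simp add: wt_def)

lemma prob_subset:
  assumes "finite V" "B \<subseteq> V"
  shows "(\<Sum>S\<in>Pow V. wt V p S * (if B \<subseteq> S then 1 else 0)) = p ^ card B"
proof -
  have fB: "finite B" using assms finite_subset by blast
  have "(\<Prod>x\<in>V. p + (if x \<in> B then 0 else 1 - p)) =
     (\<Sum>X\<in>Pow V. (\<Prod>x\<in>X. p) * (\<Prod>x\<in>V-X. (if x \<in> B then 0 else 1 - p)))"
    by (rule prod_add[OF assms(1)])
  also have "\<dots> = (\<Sum>S\<in>Pow V. wt V p S * (if B \<subseteq> S then 1 else 0))"
  proof (rule sum.cong[OF refl])
    fix X assume X: "X \<in> Pow V"
    have fX: "finite (V - X)" using assms by auto
    show "(\<Prod>x\<in>X. p) * (\<Prod>x\<in>V-X. (if x \<in> B then 0 else 1 - p)) = wt V p X * (if B \<subseteq> X then 1 else 0)"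
    proof (cases "B \<subseteq> X")
      case True
      then have "(\<Prod>x\<in>V-X. (if x \<in> B then 0 else 1 - p)) = (\<Prod>x\<in>V-X. 1 - p)"
        by (intro prod.cong) auto
      moreover have "card (V - X) = card V - card X" using X assms by (auto intro: card_Diff_subset finite_subset)
      ultimately show ?thesis using True by (simp add: wt_def)
    next
      case False
      then obtain y where "y \<in> B" "y \<notin> X" by auto
      then have "y \<in> V - X" using assms by auto
      then have "(\<Prod>x\<in>V-X. (if x \<in> B then 0 else 1 - p)) = 0"
        using fX \<open>y \<in> B\<close> by (intro prod_zero) auto
      then show ?thesis using False by simp
    qed
  qed
  finally have e: "(\<Sum>S\<in>Pow V. wt V p S * (if B \<subseteq> S then 1 else 0)) = (\<Prod>x\<in>V. p + (if x \<in> B then 0 else 1 - p))" ..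
  have "(\<Prod>x\<in>V. p + (if x \<in> B then 0 else 1 - p)) = (\<Prod>x\<in>V. (if x \<in> B then p else 1))"
    by (intro prod.cong) auto
  also have "\<dots> = (\<Prod>x\<in>B. p)" using assms
    by (simp add: prod.If_cases Int_absorb1 Int_absorb2)
  also have "\<dots> = p ^ card B" by simp
  finally show ?thesis using e by simp
qed

lemma sum_wt: "finite V \<Longrightarrow> (\<Sum>S\<in>Pow V. wt V p S) = 1"
  using prob_subset[of V "{}" p] by simp

lemma CS_weighted:
  fixes w f g :: "'a \<Rightarrow> real"
  assumes "\<And>x. x \<in> A \<Longrightarrow> 0 \<le> w x"
  shows "(\<Sum>x\<in>A. w x * f x * g x)^2 \<le> (\<Sum>x\<in>A. w x * (f x)^2) * (\<Sum>x\<in>A. w x * (g x)^2)"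
proof (cases "finite A")
  case False then show ?thesis by simp
next
  case True
  define a where "a = (\<Sum>x\<in>A. w x * (f x)^2)"
  define b where "b = (\<Sum>x\<in>A. w x * f x * g x)"
  define c where "c = (\<Sum>x\<in>A. w x * (g x)^2)"
  have q: "\<And>t. 0 \<le> a - 2 * t * b + t^2 * c"
  proof -
    fix t :: real
    have "0 \<le> (\<Sum>x\<in>A. w x * (f x - t * g x)^2)"
      using assms by (intro sum_nonneg) auto
    also have "\<dots> = a - 2 * t * b + t^2 * c"
      unfolding a_def b_def c_def
      by (simp add: power2_eq_square algebra_simps sum.distrib sum_subtractf sum_distrib_left)
    finally show "0 \<le> a - 2 * t * b + t^2 * c" .
  qed
  have c0: "0 \<le> c" unfolding c_def using assms by (intro sum_nonneg) auto
  show ?thesis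
  proof (cases "c = 0")
    case True
    have "b = 0"
    proof (rule ccontr)
      assume "b \<noteq> 0"
      have "0 \<le> a - 2 * ((a + 1) / (2 * b)) * b + ((a+1)/(2*b))^2 * c" by (rule q)
      then show False using \<open>b \<noteq> 0\<close> True by (simp add: field_simps)
    qed
    then show ?thesis using True unfolding a_def b_def c_def by simp
  next
    case False
    then have cp: "0 < c" using c0 by simp
    have "0 \<le> a - 2 * (b/c) * b + (b/c)^2 * c" by (rule q)
    then have "0 \<le> a - b^2 / c" using cp by (simp add: field_simps power2_eq_square)
    then have "b^2 / c \<le> a" by simp
    then have "b^2 \<le> a * c" using cp by (simp add: field_simps)
    then show ?thesis unfolding a_def b_def c_def by simp
  qed
qed


definition PS :: "nat \<Rightarrow> (nat \<Rightarrow> nat \<Rightarrow> real) \<Rightarrow> real" where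
  "PS d F = (\<Sum>b<d. \<Sum>a<b. F a b)"

lemma PS_swap: "(\<Sum>x\<in>A. PS d (F x)) = PS d (\<lambda>a b. \<Sum>x\<in>A. F x a b)"
  unfolding PS_def
  by (subst sum.swap) (simp add: sum.swap[of _ A])

lemma PS_cmult: "c * PS d F = PS d (\<lambda>a b. c * F a b)"
  unfolding PS_def by (simp add: sum_distrib_left)

lemma PS_multc: "PS d F * c = PS d (\<lambda>a b. F a b * c)"
  unfolding PS_def by (simp add: sum_distrib_right)

lemma PS_cong: "(\<And>a b. a < b \<Longrightarrow> b < d \<Longrightarrow> F a b = G a b) \<Longrightarrow> PS d F = PS d G"
  unfolding PS_def by (intro sum.cong refl) auto

lemma PS_mono: "(\<And>a b. a < b \<Longrightarrow> b < d \<Longrightarrow> F a b \<le> G a b) \<Longrightarrow> PS d F \<le> PS d G"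
  unfolding PS_def by (intro sum_mono) auto

lemma PS_nonneg: "(\<And>a b. a < b \<Longrightarrow> b < d \<Longrightarrow> 0 \<le> F a b) \<Longrightarrow> 0 \<le> PS d F"
  unfolding PS_def by (intro sum_nonneg) auto

lemma PS_ge_term:
  assumes "\<And>a b. a < b \<Longrightarrow> b < d \<Longrightarrow> 0 \<le> F a b" "a < b" "b < d"
  shows "F a b \<le> PS d F"
proof -
  have "F a b \<le> (\<Sum>a'<b. F a' b)"
    using assms by (intro member_le_sum) auto
  also have "\<dots> \<le> (\<Sum>b'<d. \<Sum>a'<b'. F a' b')"
    using assms by (intro member_le_sum[where f="\<lambda>b'. \<Sum>a'<b'. F a' b'"] sum_nonneg) auto
  finally show ?thesis unfolding PS_def .
qed

lemma PS_prod: "PS d (\<lambda>a b. g a * g b) = ((\<Sum>a<d. g a)^2 - (\<Sum>a<d. (g a)^2)) / 2"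
  unfolding PS_def
proof (induction d)
  case 0 then show ?case by simp
next
  case (Suc d)
  have "(\<Sum>b<Suc d. \<Sum>a<b. g a * g b) = (\<Sum>b<d. \<Sum>a<b. g a * g b) + g d * (\<Sum>a<d. g a)"
    by (simp add: sum_distrib_left mult.commute)
  also have "\<dots> = ((\<Sum>a<Suc d. g a)^2 - (\<Sum>a<Suc d. (g a)^2)) / 2"
    using Suc by (simp add: power2_eq_square algebra_simps)
  finally show ?case .
qed

lemma PS_const: "PS d (\<lambda>a b. c) = c * (real d * (real d - 1) / 2)"
proof -
  have 1: "PS d (\<lambda>a b. 1) = real d * (real d - 1) / 2"
    using PS_prod[of d "\<lambda>_. 1"] by (simp add: power2_eq_square algebra_simps)
  have "PS d (\<lambda>a b. c) = c * PS d (\<lambda>a b. 1)" using PS_cmult[of c d "\<lambda>a b. 1"] by simp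
  then show ?thesis using 1 by simp
qed

lemma PS_mult: "PS d F * PS d G = PS d (\<lambda>a b. PS d (\<lambda>c e. F a b * G c e))"
  unfolding PS_multc[of d F] by (intro PS_cong) (simp add: PS_cmult)

definition T :: "nat \<Rightarrow> (nat \<Rightarrow> nat \<Rightarrow> nat \<Rightarrow> nat \<Rightarrow> nat \<Rightarrow> nat \<Rightarrow> real) \<Rightarrow> real" where
  "T d F = PS d (\<lambda>j1 j2. PS d (\<lambda>l1 l2. PS d (\<lambda>l3 l4. F j1 j2 l1 l2 l3 l4)))"

lemma T_swap: "(\<Sum>x\<in>A. T d (F x)) = T d (\<lambda>j1 j2 l1 l2 l3 l4. \<Sum>x\<in>A. F x j1 j2 l1 l2 l3 l4)"
  unfolding T_def by (simp add: PS_swap)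

lemma T_cmult: "c * T d F = T d (\<lambda>j1 j2 l1 l2 l3 l4. c * F j1 j2 l1 l2 l3 l4)"
  unfolding T_def by (simp add: PS_cmult)

lemma T_multc: "T d F * c = T d (\<lambda>j1 j2 l1 l2 l3 l4. F j1 j2 l1 l2 l3 l4 * c)"
  unfolding T_def by (simp add: PS_multc)

definition validw :: "nat \<Rightarrow> nat \<Rightarrow> nat \<Rightarrow> nat \<Rightarrow> nat \<Rightarrow> nat \<Rightarrow> nat \<Rightarrow> bool" where
  "validw d j1 j2 l1 l2 l3 l4 \<longleftrightarrow> j1 < j2 \<and> j2 < d \<and> l1 < l2 \<and> l2 < d \<and> l3 < l4 \<and> l4 < d"

lemma T_cong: "(\<And>j1 j2 l1 l2 l3 l4. validw d j1 j2 l1 l2 l3 l4 \<Longrightarrow> F j1 j2 l1 l2 l3 l4 = G j1 j2 l1 l2 l3 l4)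
   \<Longrightarrow> T d F = T d G"
  unfolding T_def validw_def by (intro PS_cong) auto

lemma T_mono: "(\<And>j1 j2 l1 l2 l3 l4. validw d j1 j2 l1 l2 l3 l4 \<Longrightarrow> F j1 j2 l1 l2 l3 l4 \<le> G j1 j2 l1 l2 l3 l4)
   \<Longrightarrow> T d F \<le> T d G"
  unfolding T_def validw_def by (intro PS_mono) auto

lemma T_nonneg: "(\<And>j1 j2 l1 l2 l3 l4. validw d j1 j2 l1 l2 l3 l4 \<Longrightarrow> 0 \<le> F j1 j2 l1 l2 l3 l4)
   \<Longrightarrow> 0 \<le> T d F"
  unfolding T_def validw_def by (intro PS_nonneg) auto

lemma T_ge_term:
  assumes "\<And>j1 j2 l1 l2 l3 l4. validw d j1 j2 l1 l2 l3 l4 \<Longrightarrow> 0 \<le> F j1 j2 l1 l2 l3 l4"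
    "validw d j1 j2 l1 l2 l3 l4"
  shows "F j1 j2 l1 l2 l3 l4 \<le> T d F"
proof -
  have v: "j1 < j2" "j2 < d" "l1 < l2" "l2 < d" "l3 < l4" "l4 < d" using assms(2) unfolding validw_def by auto
  have "F j1 j2 l1 l2 l3 l4 \<le> PS d (\<lambda>l3 l4. F j1 j2 l1 l2 l3 l4)"
    using v assms(1) by (intro PS_ge_term) (auto simp: validw_def)
  also have "\<dots> \<le> PS d (\<lambda>l1 l2. PS d (\<lambda>l3 l4. F j1 j2 l1 l2 l3 l4))"
    using v assms(1) by (intro PS_ge_term[where F="\<lambda>l1 l2. PS d (\<lambda>l3 l4. F j1 j2 l1 l2 l3 l4)"] PS_nonneg) (auto simp: validw_def)
  also have "\<dots> \<le> T d F"
    unfolding T_def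
    using v assms(1) by (intro PS_ge_term[where F="\<lambda>j1 j2. PS d (\<lambda>l1 l2. PS d (\<lambda>l3 l4. F j1 j2 l1 l2 l3 l4))"] PS_nonneg) (auto simp: validw_def)
  finally show ?thesis .
qed

lemma T_const: "T d (\<lambda>j1 j2 l1 l2 l3 l4. c) = c * (real d * (real d - 1) / 2)^3"
  unfolding T_def by (simp add: PS_const PS_cmult[symmetric] power3_eq_cube algebra_simps)

lemma T_prod4:
  "T d (\<lambda>j1 j2 l1 l2 l3 l4. g j1 l1 * g j1 l2 * g j2 l3 * g j2 l4)
   = PS d (\<lambda>j1 j2. PS d (\<lambda>l1 l2. g j1 l1 * g j1 l2) * PS d (\<lambda>l3 l4. g j2 l3 * g j2 l4))"
  unfolding T_def
  by (intro PS_cong) (simp add: PS_mult mult.assoc)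


locale TS =
  fixes V :: "nat set" and E :: "nat \<Rightarrow> nat \<Rightarrow> bool" and d v :: nat and f :: "nat list \<Rightarrow> nat"
  assumes G: "fin_graph V E" and TR: "dk_tree E d 3 v f" and FP: "four_proper d 3 f"
begin

lemma finV: "finite V" using G unfolding fin_graph_def by auto
lemma EV: "E x y \<Longrightarrow> x \<in> V \<and> y \<in> V" using G unfolding fin_graph_def by auto
lemma Eirr: "E x y \<Longrightarrow> x \<noteq> y" using G unfolding fin_graph_def by auto
lemma Esym: "E x y \<Longrightarrow> E y x" using G unfolding fin_graph_def by auto

lemma root: "f [] = v" using TR unfolding dk_tree_def by auto

lemma tr0: "inj_on (\<lambda>i. f [i]) {..<d}" "i < d \<Longrightarrow> E v (f [i])"
  using TR unfolding dk_tree_def by (auto dest!: spec[of _ "[]"])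

lemma tr1: assumes "i < d"
  shows "inj_on (\<lambda>j. f [i, j]) {..<d}" "j < d \<Longrightarrow> E (f [i]) (f [i, j])" "j < d \<Longrightarrow> f [i, j] \<noteq> v"
  using TR assms unfolding dk_tree_def by (auto dest!: spec[of _ "[i]"])

lemma tr2: assumes "i < d" "j < d"
  shows "inj_on (\<lambda>l. f [i, j, l]) {..<d}" "l < d \<Longrightarrow> E (f [i, j]) (f [i, j, l])" "l < d \<Longrightarrow> f [i, j, l] \<noteq> f [i]"
  using TR assms unfolding dk_tree_def by (auto dest!: spec[of _ "[i, j]"])

lemma te0: "i < d \<Longrightarrow> {v, f [i]} \<in> tree_edges d 3 f"
  unfolding tree_edges_def using root by (auto intro!: exI[of _ "[]"])
lemma te1: "i < d \<Longrightarrow> j < d \<Longrightarrow> {f [i], f [i, j]} \<in> tree_edges d 3 f"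
  unfolding tree_edges_def by (rule CollectI, rule exI[of _ "[i]"], rule exI[of _ j]) auto
lemma te2: "i < d \<Longrightarrow> j < d \<Longrightarrow> l < d \<Longrightarrow> {f [i, j], f [i, j, l]} \<in> tree_edges d 3 f"
  unfolding tree_edges_def by (rule CollectI, rule exI[of _ "[i, j]"], rule exI[of _ l]) auto

lemma no4:
  assumes "distinct [a, b, c, e]" "{a, b} \<in> tree_edges d 3 f" "{b, c} \<in> tree_edges d 3 f"
    "{c, e} \<in> tree_edges d 3 f" "{e, a} \<in> tree_edges d 3 f"
  shows False
  using FP assms unfolding four_proper_def by blast

lemma swap2: "{a, b} = {b, a}" by auto

lemma leaf_inj:
  assumes "i < d" "j < d" "j' < d" "l < d" "l' < d" "f [i, j, l] = f [i, j', l']"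
  shows "j = j' \<and> l = l'"
proof (cases "j = j'")
  case True
  then show ?thesis using tr2(1)[OF assms(1,2)] assms by (auto dest: inj_onD)
next
  case False
  let ?c = "f [i]" and ?g = "f [i, j]" and ?g' = "f [i, j']" and ?x = "f [i, j, l]"
  have gg: "?g \<noteq> ?g'" using tr1(1)[OF assms(1)] False assms by (auto dest: inj_onD)
  have "?c \<noteq> ?g" using Eirr tr1(2)[OF assms(1,2)] by auto
  moreover have "?c \<noteq> ?g'" using Eirr tr1(2)[OF assms(1,3)] by auto
  moreover have "?c \<noteq> ?x" using tr2(3)[OF assms(1,2,4)] by auto
  moreover have "?g \<noteq> ?x" using Eirr tr2(2)[OF assms(1,2,4)] by auto
  moreover have "?g' \<noteq> ?x" using Eirr tr2(2)[OF assms(1,3,5)] assms(6) by auto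
  ultimately have "distinct [?c, ?g, ?x, ?g']" using gg by auto
  moreover have "{?x, ?g'} \<in> tree_edges d 3 f" using te2[OF assms(1,3,5)] assms(6) by (simp add: swap2)
  moreover have "{?g', ?c} \<in> tree_edges d 3 f" using te1[OF assms(1,3)] by (simp add: swap2)
  ultimately show ?thesis using no4 te1[OF assms(1,2)] te2[OF assms(1,2,4)] by blast
qed

lemma g_inj:
  assumes "i < d" "i' < d" "j < d" "j' < d" "f [i, j] = f [i', j']"
  shows "i = i' \<and> j = j'"
proof (cases "i = i'")
  case True
  then show ?thesis using tr1(1)[OF assms(1)] assms by (auto dest: inj_onD)
next
  case False
  let ?c = "f [i]" and ?c' = "f [i']" and ?h = "f [i, j]"
  have cc: "?c \<noteq> ?c'" using tr0(1) False assms by (auto dest: inj_onD)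
  have "v \<noteq> ?c" using Eirr tr0(2)[OF assms(1)] by auto
  moreover have "v \<noteq> ?c'" using Eirr tr0(2)[OF assms(2)] by auto
  moreover have "v \<noteq> ?h" using tr1(3)[OF assms(1,3)] by auto
  moreover have "?c \<noteq> ?h" using Eirr tr1(2)[OF assms(1,3)] by auto
  moreover have "?c' \<noteq> ?h" using Eirr tr1(2)[OF assms(2,4)] assms(5) by auto
  ultimately have "distinct [v, ?c, ?h, ?c']" using cc by auto
  moreover have "{?h, ?c'} \<in> tree_edges d 3 f" using te1[OF assms(2,4)] assms(5) by (simp add: swap2)
  moreover have "{?c', v} \<in> tree_edges d 3 f" using te0[OF assms(2)] by (simp add: swap2)
  ultimately show ?thesis using no4 te0[OF assms(1)] te1[OF assms(1,3)] by blast
qed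

lemma common_node:
  assumes "i1 < d" "j1 < d" "i2 < d" "j2 < d" "l1 < d" "l2 < d" "l3 < d" "l4 < d"
    "f [i1, j1, l1] = x" "f [i1, j1, l2] = y" "f [i2, j2, l3] = x" "f [i2, j2, l4] = y" "x \<noteq> y"
  shows "i1 = i2 \<and> j1 = j2"
proof (rule ccontr)
  assume ne: "\<not> (i1 = i2 \<and> j1 = j2)"
  let ?h1 = "f [i1, j1]" and ?h2 = "f [i2, j2]"
  have hh: "?h1 \<noteq> ?h2" using g_inj assms(1-4) ne by blast
  have e: "E ?h1 x" "E ?h1 y" "E ?h2 x" "E ?h2 y"
    using tr2(2)[OF assms(1,2,5)] tr2(2)[OF assms(1,2,6)] tr2(2)[OF assms(3,4,7)] tr2(2)[OF assms(3,4,8)]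
      assms(9-12) by auto
  have "x \<noteq> ?h1" "y \<noteq> ?h1" "x \<noteq> ?h2" "y \<noteq> ?h2" using Eirr[OF e(1)] Eirr[OF e(2)] Eirr[OF e(3)] Eirr[OF e(4)] by auto
  then have "distinct [x, ?h1, y, ?h2]" using hh assms(13) by auto
  moreover have "{x, ?h1} \<in> tree_edges d 3 f" using te2[OF assms(1,2,5)] assms by (simp add: swap2)
  moreover have "{?h1, y} \<in> tree_edges d 3 f" using te2[OF assms(1,2,6)] assms by simp
  moreover have "{y, ?h2} \<in> tree_edges d 3 f" using te2[OF assms(3,4,8)] assms by (simp add: swap2)
  moreover have "{?h2, x} \<in> tree_edges d 3 f" using te2[OF assms(3,4,7)] assms by simp
  ultimately show False using no4 by blast
qed

end


lemma E_T:
  fixes A :: "nat \<Rightarrow> nat \<Rightarrow> nat \<Rightarrow> nat \<Rightarrow> nat \<Rightarrow> nat \<Rightarrow> nat set"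
  assumes "finite V" "\<And>a b c e g h. validw d a b c e g h \<Longrightarrow> A a b c e g h \<subseteq> V"
  shows "(\<Sum>S\<in>Pow V. wt V p S * T d (\<lambda>a b c e g h. of_bool (A a b c e g h \<subseteq> S)))
       = T d (\<lambda>a b c e g h. p ^ card (A a b c e g h))"
proof -
  have "(\<Sum>S\<in>Pow V. wt V p S * T d (\<lambda>a b c e g h. of_bool (A a b c e g h \<subseteq> S)))
     = (\<Sum>S\<in>Pow V. T d (\<lambda>a b c e g h. wt V p S * of_bool (A a b c e g h \<subseteq> S)))"
    by (simp add: T_cmult)
  also have "\<dots> = T d (\<lambda>a b c e g h. \<Sum>S\<in>Pow V. wt V p S * of_bool (A a b c e g h \<subseteq> S))"
    by (rule T_swap)
  also have "\<dots> = T d (\<lambda>a b c e g h. p ^ card (A a b c e g h))"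
    using prob_subset[OF assms(1) assms(2)] by (intro T_cong) (simp add: of_bool_def)
  finally show ?thesis .
qed

lemma prob_subset2:
  assumes "finite V" "A \<subseteq> V" "B \<subseteq> V"
  shows "(\<Sum>S\<in>Pow V. wt V p S * (if A \<subseteq> S \<and> B \<subseteq> S then 1 else 0)) = p ^ card (A \<union> B)"
  using prob_subset[OF assms(1), of "A \<union> B" p] assms by simp

lemma E_TT:
  fixes A B :: "nat \<Rightarrow> nat \<Rightarrow> nat \<Rightarrow> nat \<Rightarrow> nat \<Rightarrow> nat \<Rightarrow> nat set"
  assumes "finite V" "\<And>a b c e g h. validw d a b c e g h \<Longrightarrow> A a b c e g h \<subseteq> V"
    "\<And>a b c e g h. validw d a b c e g h \<Longrightarrow> B a b c e g h \<subseteq> V"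
  shows "(\<Sum>S\<in>Pow V. wt V p S * (T d (\<lambda>a b c e g h. of_bool (A a b c e g h \<subseteq> S)) *
              T d (\<lambda>a b c e g h. of_bool (B a b c e g h \<subseteq> S))))
       = T d (\<lambda>a b c e g h. T d (\<lambda>a' b' c' e' g' h'. p ^ card (A a b c e g h \<union> B a' b' c' e' g' h')))"
proof -
  have "(\<Sum>S\<in>Pow V. wt V p S * (T d (\<lambda>a b c e g h. of_bool (A a b c e g h \<subseteq> S)) *
              T d (\<lambda>a b c e g h. of_bool (B a b c e g h \<subseteq> S))))
     = (\<Sum>S\<in>Pow V. T d (\<lambda>a b c e g h. T d (\<lambda>a' b' c' e' g' h'.
           wt V p S * of_bool (A a b c e g h \<union> B a' b' c' e' g' h' \<subseteq> S))))"
  proof (rule sum.cong[OF refl])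
    fix S
    define TB where "TB = T d (\<lambda>a b c e g h. of_bool (B a b c e g h \<subseteq> S))"
    have 1: "wt V p S * T d (\<lambda>a b c e g h. of_bool (A a b c e g h \<subseteq> S)) =
       T d (\<lambda>a b c e g h. wt V p S * of_bool (A a b c e g h \<subseteq> S))" by (rule T_cmult)
    have "wt V p S * (T d (\<lambda>a b c e g h. of_bool (A a b c e g h \<subseteq> S)) * TB)
       = T d (\<lambda>a b c e g h. wt V p S * of_bool (A a b c e g h \<subseteq> S)) * TB"
      unfolding 1[symmetric] by (simp only: mult.assoc)
    also have "\<dots> = T d (\<lambda>a b c e g h. (wt V p S * of_bool (A a b c e g h \<subseteq> S)) * TB)"
      by (rule T_multc)
    finally have "wt V p S * (T d (\<lambda>a b c e g h. of_bool (A a b c e g h \<subseteq> S)) *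
              T d (\<lambda>a b c e g h. of_bool (B a b c e g h \<subseteq> S)))
      = T d (\<lambda>a b c e g h. (wt V p S * of_bool (A a b c e g h \<subseteq> S)) *
              T d (\<lambda>a b c e g h. of_bool (B a b c e g h \<subseteq> S)))" unfolding TB_def .
    also have "\<dots> = T d (\<lambda>a b c e g h. T d (\<lambda>a' b' c' e' g' h'.
           wt V p S * of_bool (A a b c e g h \<union> B a' b' c' e' g' h' \<subseteq> S)))"
      by (intro T_cong, subst T_cmult, intro T_cong) simp
    finally show "wt V p S * (T d (\<lambda>a b c e g h. of_bool (A a b c e g h \<subseteq> S)) *
              T d (\<lambda>a b c e g h. of_bool (B a b c e g h \<subseteq> S))) = T d (\<lambda>a b c e g h. T d (\<lambda>a' b' c' e' g' h'.
           wt V p S * of_bool (A a b c e g h \<union> B a' b' c' e' g' h' \<subseteq> S)))" .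
  qed
  also have "\<dots> = T d (\<lambda>a b c e g h. \<Sum>S\<in>Pow V. T d (\<lambda>a' b' c' e' g' h'.
           wt V p S * of_bool (A a b c e g h \<union> B a' b' c' e' g' h' \<subseteq> S)))"
    by (rule T_swap)
  also have "\<dots> = T d (\<lambda>a b c e g h. T d (\<lambda>a' b' c' e' g' h'. \<Sum>S\<in>Pow V.
           wt V p S * of_bool (A a b c e g h \<union> B a' b' c' e' g' h' \<subseteq> S)))"
    by (simp add: T_swap)
  also have "\<dots> = T d (\<lambda>a b c e g h. T d (\<lambda>a' b' c' e' g' h'. p ^ card (A a b c e g h \<union> B a' b' c' e' g' h')))"
    using assms
    by (intro T_cong) (simp add: of_bool_def prob_subset2)
  finally show ?thesis .
qed

lemma pcard_insert: "finite C \<Longrightarrow> (p::real) ^ card (insert x C) = (if x \<in> C then 1 else p) * p ^ card C"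
  by (simp add: card_insert_if)

lemma pcard_union4:
  assumes "finite C" "distinct [a, b, c, e]"
  shows "(p::real) ^ card (C \<union> {a, b, c, e}) = p ^ card C *
     ((if a \<in> C then 1 else p) * (if b \<in> C then 1 else p) * (if c \<in> C then 1 else p) * (if e \<in> C then 1 else p))"
proof -
  have "C \<union> {a, b, c, e} = insert a (insert b (insert c (insert e C)))" by auto
  then show ?thesis using assms by (simp add: pcard_insert)
qed

lemma sum_if_set:
  assumes "M \<subseteq> {..<d}"
  shows "(\<Sum>l<d. if l \<in> M then x else y) = real (card M) * x + real (d - card M) * (y::real)"
proof -
  have fM: "finite M" using assms finite_subset by blast
  have "(\<Sum>l<d. if l \<in> M then x else y) = (\<Sum>l\<in>{..<d} \<inter> {l. l \<in> M}. x) + (\<Sum>l\<in>{..<d} \<inter> - {l. l \<in> M}. y)"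
    by (rule sum.If_cases) simp
  also have "{..<d} \<inter> {l. l \<in> M} = M" using assms by auto
  also have "{..<d} \<inter> - {l. l \<in> M} = {..<d} - M" by auto
  finally show ?thesis using assms fM by (simp add: card_Diff_subset)
qed

lemma sum_if2:
  assumes "a < b" "b < d"
  shows "(\<Sum>l<d. if l = a \<or> l = b then x else y) = 2 * x + real (d - 2) * (y::real)"
proof -
  have "(\<Sum>l<d. if l = a \<or> l = b then x else y) = (\<Sum>l<d. if l \<in> {a, b} then x else y)" by simp
  also have "\<dots> = real (card {a, b}) * x + real (d - card {a, b}) * y"
    using assms by (intro sum_if_set) auto
  finally show ?thesis using assms by simp
qed

lemma sum_sq_le: "(\<And>x. x \<in> A \<Longrightarrow> 0 \<le> h x) \<Longrightarrow> (\<Sum>x\<in>A. (h x)^2) \<le> (\<Sum>x\<in>A. h x :: real)^2"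
proof (induction A rule: infinite_finite_induct)
  case (insert x F)
  have "0 \<le> sum h F" using insert by (intro sum_nonneg) auto
  then have "(\<Sum>x\<in>insert x F. (h x)^2) \<le> (h x)^2 + (sum h F)^2" using insert by auto
  also have "\<dots> \<le> (h x + sum h F)^2" using \<open>0 \<le> sum h F\<close> insert by (simp add: power2_eq_square algebra_simps)
  finally show ?case using insert by simp
qed auto


locale TSp = TS +
  fixes p :: real
  assumes p0: "0 \<le> p" and p1: "p \<le> 1"
begin

definition Bw where "Bw i j1 j2 l1 l2 l3 l4 = {f [i, j1, l1], f [i, j1, l2], f [i, j2, l3], f [i, j2, l4]}"

lemma Bw_V: "i < d \<Longrightarrow> validw d j1 j2 l1 l2 l3 l4 \<Longrightarrow> Bw i j1 j2 l1 l2 l3 l4 \<subseteq> V"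
  unfolding Bw_def validw_def using EV tr2(2) by (auto, meson less_trans)+

lemma Bw_distinct: "i < d \<Longrightarrow> validw d j1 j2 l1 l2 l3 l4 \<Longrightarrow>
   distinct [f [i, j1, l1], f [i, j1, l2], f [i, j2, l3], f [i, j2, l4]]"
  unfolding validw_def using leaf_inj[of i] by (auto, (metis less_trans nat_neq_iff)+)

lemma Bw_card: "i < d \<Longrightarrow> validw d j1 j2 l1 l2 l3 l4 \<Longrightarrow> card (Bw i j1 j2 l1 l2 l3 l4) = 4"
  using Bw_distinct[of i j1 j2 l1 l2 l3 l4] unfolding Bw_def by simp

lemma Bw_mem: "i < d \<Longrightarrow> validw d j1 j2 l1 l2 l3 l4 \<Longrightarrow> j < d \<Longrightarrow> l < d \<Longrightarrow>
  f [i, j, l] \<in> Bw i j1 j2 l1 l2 l3 l4 \<longleftrightarrow> (j = j1 \<and> (l = l1 \<or> l = l2)) \<or> (j = j2 \<and> (l = l3 \<or> l = l4))"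
  unfolding Bw_def validw_def using leaf_inj[of i j] by (auto, (meson less_trans)+)

definition X where "X i S = T d (\<lambda>j1 j2 l1 l2 l3 l4. of_bool (Bw i j1 j2 l1 l2 l3 l4 \<subseteq> S))"

definition n2 where "n2 = real d * (real d - 1) / 2"

lemma EX: "i < d \<Longrightarrow> (\<Sum>S\<in>Pow V. wt V p S * X i S) = p ^ 4 * n2 ^ 3"
proof -
  assume i: "i < d"
  have "(\<Sum>S\<in>Pow V. wt V p S * X i S) = T d (\<lambda>j1 j2 l1 l2 l3 l4. p ^ card (Bw i j1 j2 l1 l2 l3 l4))"
    unfolding X_def using Bw_V[OF i] by (intro E_T finV)
  also have "\<dots> = T d (\<lambda>j1 j2 l1 l2 l3 l4. p ^ 4)"
    using Bw_card[OF i] by (intro T_cong) simp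
  finally show ?thesis by (simp add: T_const n2_def)
qed

lemma EXX: "i < d \<Longrightarrow> i' < d \<Longrightarrow> (\<Sum>S\<in>Pow V. wt V p S * (X i S * X i' S)) =
  T d (\<lambda>a b c e g h. T d (\<lambda>a' b' c' e' g' h'. p ^ card (Bw i a b c e g h \<union> Bw i' a' b' c' e' g' h')))"
  unfolding X_def using Bw_V by (intro E_TT finV) auto

definition phi where "phi B x = (if x \<in> B then 1 else p)"
definition R where "R B i' j = PS d (\<lambda>l l'. phi B (f [i', j, l]) * phi B (f [i', j, l']))"

lemma inner_factor:
  assumes "i < d" "i' < d" "validw d j1 j2 l1 l2 l3 l4"
  shows "T d (\<lambda>a' b' c' e' g' h'. p ^ card (Bw i j1 j2 l1 l2 l3 l4 \<union> Bw i' a' b' c' e' g' h'))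
     = p ^ 4 * PS d (\<lambda>a b. R (Bw i j1 j2 l1 l2 l3 l4) i' a * R (Bw i j1 j2 l1 l2 l3 l4) i' b)"
proof -
  let ?B = "Bw i j1 j2 l1 l2 l3 l4"
  have "T d (\<lambda>a' b' c' e' g' h'. p ^ card (?B \<union> Bw i' a' b' c' e' g' h'))
    = T d (\<lambda>a' b' c' e' g' h'. p ^ 4 * (phi ?B (f [i', a', c']) * phi ?B (f [i', a', e']) * phi ?B (f [i', b', g']) * phi ?B (f [i', b', h'])))"
  proof (intro T_cong)
    fix a' b' c' e' g' h' assume v: "validw d a' b' c' e' g' h'"
    have "p ^ card (?B \<union> Bw i' a' b' c' e' g' h') = p ^ card ?B *
       (phi ?B (f [i', a', c']) * phi ?B (f [i', a', e']) * phi ?B (f [i', b', g']) * phi ?B (f [i', b', h']))"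
      unfolding Bw_def[of i' a'] phi_def
      by (rule pcard_union4) (use Bw_distinct[OF assms(2) v] in \<open>auto simp: Bw_def\<close>)
    then show "p ^ card (?B \<union> Bw i' a' b' c' e' g' h') = p ^ 4 *
       (phi ?B (f [i', a', c']) * phi ?B (f [i', a', e']) * phi ?B (f [i', b', g']) * phi ?B (f [i', b', h']))"
      using Bw_card[OF assms(1,3)] by simp
  qed
  also have "\<dots> = p ^ 4 * T d (\<lambda>a' b' c' e' g' h'. phi ?B (f [i', a', c']) * phi ?B (f [i', a', e']) * phi ?B (f [i', b', g']) * phi ?B (f [i', b', h']))"
    by (simp add: T_cmult)
  also have "\<dots> = p ^ 4 * PS d (\<lambda>a b. R ?B i' a * R ?B i' b)"
    unfolding R_def by (subst T_prod4) simp
  finally show ?thesis .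
qed

lemma R_formula: "R B i' j = ((\<Sum>l<d. phi B (f [i', j, l]))^2 - (\<Sum>l<d. (phi B (f [i', j, l]))^2)) / 2"
  unfolding R_def by (rule PS_prod)

lemma R_nonneg: "0 \<le> R B i' j"
  unfolding R_def phi_def using p0 by (intro PS_nonneg) auto

definition r1 where "r1 = ((2 + real (d - 2) * p)^2 - (2 + real (d - 2) * p^2)) / 2"
definition r0 where "r0 = ((real d * p)^2 - real d * p^2) / 2"
definition Qv where "Qv = ((2 * r1 + real (d - 2) * r0)^2 - (2 * r1^2 + real (d - 2) * r0^2)) / 2"

lemma R_child:
  assumes "i < d" "validw d j1 j2 l1 l2 l3 l4" "j < d"
  shows "R (Bw i j1 j2 l1 l2 l3 l4) i j = (if j = j1 \<or> j = j2 then r1 else r0)"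
proof -
  let ?B = "Bw i j1 j2 l1 l2 l3 l4"
  have v: "j1 < j2" "j2 < d" "l1 < l2" "l2 < d" "l3 < l4" "l4 < d" using assms(2) unfolding validw_def by auto
  show ?thesis
  proof (cases "j = j1 \<or> j = j2")
    case True
    then obtain a b where ab: "a < b" "b < d" "\<And>l. l < d \<Longrightarrow> f [i, j, l] \<in> ?B \<longleftrightarrow> l = a \<or> l = b"
      using Bw_mem[OF assms] v by (cases "j = j1") auto
    have s1: "(\<Sum>l<d. phi ?B (f [i, j, l])) = (\<Sum>l<d. if l = a \<or> l = b then 1 else p)"
      unfolding phi_def using ab by (intro sum.cong) auto
    have s2: "(\<Sum>l<d. (phi ?B (f [i, j, l]))^2) = (\<Sum>l<d. if l = a \<or> l = b then 1 else p^2)"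
      unfolding phi_def using ab by (intro sum.cong) auto
    show ?thesis using True unfolding R_formula s1 s2 sum_if2[OF ab(1,2)] r1_def by simp
  next
    case False
    have s1: "(\<Sum>l<d. phi ?B (f [i, j, l])) = (\<Sum>l<d. p)"
      unfolding phi_def using Bw_mem[OF assms] False by (intro sum.cong) auto
    have s2: "(\<Sum>l<d. (phi ?B (f [i, j, l]))^2) = (\<Sum>l<d. p^2)"
      unfolding phi_def using Bw_mem[OF assms] False by (intro sum.cong) auto
    show ?thesis using False unfolding R_formula s1 s2 r0_def by (simp add: power_mult_distrib)
  qed
qed

lemma PS_child:
  assumes "i < d" "validw d j1 j2 l1 l2 l3 l4"
  shows "PS d (\<lambda>a b. R (Bw i j1 j2 l1 l2 l3 l4) i a * R (Bw i j1 j2 l1 l2 l3 l4) i b) = Qv"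
proof -
  let ?B = "Bw i j1 j2 l1 l2 l3 l4"
  have v: "j1 < j2" "j2 < d" using assms(2) unfolding validw_def by auto
  have s1: "(\<Sum>j<d. R ?B i j) = (\<Sum>j<d. if j = j1 \<or> j = j2 then r1 else r0)"
    using R_child[OF assms] by (intro sum.cong) auto
  have s2: "(\<Sum>j<d. (R ?B i j)^2) = (\<Sum>j<d. if j = j1 \<or> j = j2 then r1^2 else r0^2)"
    using R_child[OF assms] by (intro sum.cong) auto
  show ?thesis unfolding PS_prod s1 s2 sum_if2[OF v] Qv_def by simp
qed

lemma EX2: "i < d \<Longrightarrow> (\<Sum>S\<in>Pow V. wt V p S * (X i S * X i S)) = p ^ 4 * Qv * n2 ^ 3"
proof -
  assume i: "i < d"
  have "(\<Sum>S\<in>Pow V. wt V p S * (X i S * X i S)) = T d (\<lambda>a b c e g h. p ^ 4 * Qv)"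
    unfolding EXX[OF i i] using inner_factor[OF i i] PS_child[OF i] by (intro T_cong) simp
  then show ?thesis by (simp add: T_const n2_def)
qed

end


lemma real_choose2: "real (k choose 2) = (real k ^ 2 - real k) / 2"
proof (induction k)
  case 0 then show ?case by simp
next
  case (Suc k)
  have "(Suc k) choose 2 = (k choose 1) + (k choose 2)"
    by (metis Suc_1 binomial_Suc_Suc)
  then show ?case using Suc by (simp add: power2_eq_square algebra_simps)
qed

context TSp begin

definition mset where "mset B i' j = {l \<in> {..<d}. f [i', j, l] \<in> B}"
definition mm where "mm B i' j = card (mset B i' j)"

lemma mm_le: "mm B i' j \<le> d"
  unfolding mm_def mset_def by (rule order_trans[OF card_mono[of "{..<d}"]]) auto

lemma R_root: "R B i' j \<le> (real d * p)^2 / 2 + real d * p * real (mm B i' j) + (real (mm B i' j)^2 - real (mm B i' j)) / 2"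
proof -
  let ?M = "mset B i' j" and ?m = "real (mm B i' j)"
  have Msub: "?M \<subseteq> {..<d}" unfolding mset_def by auto
  have s1: "(\<Sum>l<d. phi B (f [i', j, l])) = (\<Sum>l<d. if l \<in> ?M then 1 else p)"
    unfolding phi_def mset_def by (intro sum.cong) auto
  have s2: "(\<Sum>l<d. (phi B (f [i', j, l]))^2) = (\<Sum>l<d. if l \<in> ?M then 1 else p^2)"
    unfolding phi_def mset_def by (intro sum.cong) auto
  have md: "real (d - mm B i' j) = real d - ?m" using mm_le[of B i' j] by simp
  have e1: "(\<Sum>l<d. phi B (f [i', j, l])) = ?m + (real d - ?m) * p"
    unfolding s1 sum_if_set[OF Msub] md[unfolded mm_def] mm_def by simp
  have e2: "(\<Sum>l<d. (phi B (f [i', j, l]))^2) = ?m + (real d - ?m) * p^2"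
    unfolding s2 sum_if_set[OF Msub] md[unfolded mm_def] mm_def by simp
  have m0: "0 \<le> ?m" "?m \<le> real d" using mm_le[of B i' j] by auto
  have a: "0 \<le> ?m + (real d - ?m) * p" using m0 p0 by simp
  have b: "?m + (real d - ?m) * p \<le> ?m + real d * p" using m0 p0 by (simp add: algebra_simps)
  have "(?m + (real d - ?m) * p)^2 \<le> (?m + real d * p)^2" by (rule power_mono[OF b a])
  moreover have "0 \<le> (real d - ?m) * p^2" using m0 by simp
  ultimately have "R B i' j \<le> ((?m + real d * p)^2 - ?m) / 2"
    unfolding R_formula e1 e2 by simp
  also have "\<dots> = (real d * p)^2 / 2 + real d * p * ?m + (?m^2 - ?m) / 2"
    by (simp add: power2_eq_square field_simps)
  finally show ?thesis .
qed

lemma sum_mm: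
  assumes "i' < d" "finite B" "card B \<le> 4"
  shows "(\<Sum>j<d. mm B i' j) \<le> 4"
proof -
  have "(\<Sum>j<d. mm B i' j) = card (SIGMA j:{..<d}. mset B i' j)"
    unfolding mm_def by (rule card_SigmaI[symmetric]) (auto simp: mset_def)
  also have "\<dots> \<le> card B"
  proof (rule card_inj_on_le[OF _ _ assms(2)])
    show "inj_on (\<lambda>(j, l). f [i', j, l]) (SIGMA j:{..<d}. mset B i' j)"
      unfolding inj_on_def mset_def using leaf_inj[OF assms(1)] by auto
    show "(\<lambda>(j, l). f [i', j, l]) ` (SIGMA j:{..<d}. mset B i' j) \<subseteq> B"
      unfolding mset_def by auto
  qed
  finally show ?thesis using assms(3) by simp
qed

definition Nset where "Nset B i' j = B \<inter> (\<lambda>l. f [i', j, l]) ` {..<d}"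

lemma card_Nset: "i' < d \<Longrightarrow> j < d \<Longrightarrow> card (Nset B i' j) = mm B i' j"
proof -
  assume a: "i' < d" "j < d"
  have "Nset B i' j = (\<lambda>l. f [i', j, l]) ` mset B i' j" unfolding Nset_def mset_def by auto
  moreover have "inj_on (\<lambda>l. f [i', j, l]) (mset B i' j)"
    using tr2(1)[OF a] unfolding mset_def by (rule inj_on_subset) auto
  ultimately show ?thesis unfolding mm_def by (simp add: card_image)
qed

lemma sum_K:
  assumes "finite B" "card B = 4"
  shows "(\<Sum>i'<d. \<Sum>j<d. mm B i' j choose 2) \<le> 6"
proof -
  define P2 where "P2 A = {e. e \<subseteq> A \<and> card e = 2}" for A :: "nat set"
  have fN: "finite (Nset B i' j)" for i' j using assms(1) unfolding Nset_def by auto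
  have "(\<Sum>i'<d. \<Sum>j<d. mm B i' j choose 2) = (\<Sum>i'<d. \<Sum>j<d. card (P2 (Nset B i' j)))"
    unfolding P2_def by (intro sum.cong refl) (simp add: n_subsets fN card_Nset)
  also have "\<dots> = (\<Sum>n\<in>{..<d} \<times> {..<d}. card (P2 (Nset B (fst n) (snd n))))"
    by (simp add: sum.cartesian_product case_prod_beta)
  also have "\<dots> = card (SIGMA n:{..<d} \<times> {..<d}. P2 (Nset B (fst n) (snd n)))"
    by (rule card_SigmaI[symmetric]) (auto simp: P2_def fN)
  also have "\<dots> \<le> card (P2 B)"
  proof (rule card_inj_on_le)
    show "finite (P2 B)" unfolding P2_def using assms(1) by auto
    show "snd ` (SIGMA n:{..<d} \<times> {..<d}. P2 (Nset B (fst n) (snd n))) \<subseteq> P2 B"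
      unfolding P2_def Nset_def by auto
    show "inj_on snd (SIGMA n:{..<d} \<times> {..<d}. P2 (Nset B (fst n) (snd n)))"
    proof (rule inj_onI)
      fix u w assume u: "u \<in> (SIGMA n:{..<d} \<times> {..<d}. P2 (Nset B (fst n) (snd n)))"
        and w: "w \<in> (SIGMA n:{..<d} \<times> {..<d}. P2 (Nset B (fst n) (snd n)))" and eq: "snd u = snd w"
      obtain i1 j1 e where ue: "u = ((i1, j1), e)" by (metis prod.collapse)
      obtain i2 j2 e' where we: "w = ((i2, j2), e')" by (metis prod.collapse)
      have ee: "e' = e" using eq ue we by simp
      have r1: "i1 < d" "j1 < d" "e \<subseteq> Nset B i1 j1" "card e = 2" using u ue unfolding P2_def by auto
      have r2: "i2 < d" "j2 < d" "e \<subseteq> Nset B i2 j2" using w we ee unfolding P2_def by auto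
      obtain x y where xy: "e = {x, y}" "x \<noteq> y" using r1(4) card_2_iff by metis
      obtain l1 l2 where L1: "l1 < d" "l2 < d" "f [i1, j1, l1] = x" "f [i1, j1, l2] = y"
        using r1(3) xy unfolding Nset_def by auto
      obtain l3 l4 where L2: "l3 < d" "l4 < d" "f [i2, j2, l3] = x" "f [i2, j2, l4] = y"
        using r2(3) xy unfolding Nset_def by auto
      have "i1 = i2 \<and> j1 = j2"
        by (rule common_node[OF r1(1,2) r2(1,2) L1(1,2) L2(1,2) L1(3,4) L2(3,4) xy(2)])
      then show "u = w" using ue we ee by simp
    qed
  qed
  also have "card (P2 B) = 6" unfolding P2_def using assms by (simp add: n_subsets choose_two)
  finally show ?thesis .
qed

end


context TSp begin

definition cc where "cc = real d * (real d * p)^2 / 2 + 4 * (real d * p)"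
definition Kr where "Kr B i' = (\<Sum>j<d. real (mm B i' j choose 2))"
definition Ub where "Ub = (real d * cc^2 + 12 * cc + 36) / 2"

lemma cc_nonneg: "0 \<le> cc" unfolding cc_def using p0 by simp

lemma Kr_nonneg: "0 \<le> Kr B i'" unfolding Kr_def by (intro sum_nonneg) auto

lemma PS_root:
  assumes "i' < d" "finite B" "card B \<le> 4"
  shows "PS d (\<lambda>a b. R B i' a * R B i' b) \<le> (cc + Kr B i')^2 / 2"
proof -
  have "(\<Sum>j<d. R B i' j) \<le> (\<Sum>j<d. (real d * p)^2 / 2 + real d * p * real (mm B i' j) + real (mm B i' j choose 2))"
    using R_root by (intro sum_mono) (simp add: real_choose2)
  also have "\<dots> = real d * (real d * p)^2 / 2 + real d * p * real (\<Sum>j<d. mm B i' j) + Kr B i'"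
    unfolding Kr_def by (simp add: sum.distrib sum_distrib_left)
  also have "\<dots> \<le> real d * (real d * p)^2 / 2 + real d * p * 4 + Kr B i'"
  proof -
    have "real (\<Sum>j<d. mm B i' j) \<le> 4" using sum_mm[OF assms] by linarith
    then show ?thesis using p0 by (intro add_mono mult_left_mono) auto
  qed
  finally have s: "(\<Sum>j<d. R B i' j) \<le> cc + Kr B i'" unfolding cc_def by simp
  have s0: "0 \<le> (\<Sum>j<d. R B i' j)" using R_nonneg by (intro sum_nonneg) auto
  have "PS d (\<lambda>a b. R B i' a * R B i' b) \<le> (\<Sum>j<d. R B i' j)^2 / 2"
    unfolding PS_prod by (simp add: sum_nonneg)
  also have "\<dots> \<le> (cc + Kr B i')^2 / 2"
    using power_mono[OF s s0, of 2] by simp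
  finally show ?thesis .
qed

lemma sum_Kr:
  assumes "finite B" "card B = 4"
  shows "(\<Sum>i'<d. Kr B i') \<le> 6"
proof -
  have "(\<Sum>i'<d. Kr B i') = real (\<Sum>i'<d. \<Sum>j<d. mm B i' j choose 2)"
    unfolding Kr_def by simp
  also have "\<dots> \<le> 6" using sum_K[OF assms] by linarith
  finally show ?thesis .
qed

lemma sum_root:
  assumes "i < d" "finite B" "card B = 4"
  shows "(\<Sum>i'\<in>{..<d} - {i}. PS d (\<lambda>a b. R B i' a * R B i' b)) \<le> Ub"
proof -
  let ?I = "{..<d} - {i}"
  have "(\<Sum>i'\<in>?I. PS d (\<lambda>a b. R B i' a * R B i' b)) \<le> (\<Sum>i'\<in>?I. (cc + Kr B i')^2 / 2)"
    using PS_root assms by (intro sum_mono) auto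
  also have "\<dots> = ((\<Sum>i'\<in>?I. cc^2) + 2 * cc * (\<Sum>i'\<in>?I. Kr B i') + (\<Sum>i'\<in>?I. (Kr B i')^2)) / 2"
  proof -
    have "(\<Sum>i'\<in>?I. (cc + Kr B i')^2 / 2) = (\<Sum>i'\<in>?I. cc^2 + 2 * cc * Kr B i' + (Kr B i')^2) / 2"
      by (simp add: sum_divide_distrib power2_sum add_ac)
    also have "(\<Sum>i'\<in>?I. cc^2 + 2 * cc * Kr B i' + (Kr B i')^2) = (\<Sum>i'\<in>?I. cc^2) + 2 * cc * (\<Sum>i'\<in>?I. Kr B i') + (\<Sum>i'\<in>?I. (Kr B i')^2)"
      by (simp add: sum.distrib sum_distrib_left)
    finally show ?thesis .
  qed
  also have "\<dots> \<le> (real d * cc^2 + 2 * cc * 6 + 36) / 2"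
  proof -
    have k: "(\<Sum>i'\<in>?I. Kr B i') \<le> 6"
      using sum_Kr[OF assms(2,3)] sum_mono2[of "{..<d}" ?I "Kr B"] Kr_nonneg by force
    have k0: "0 \<le> (\<Sum>i'\<in>?I. Kr B i')" using Kr_nonneg by (intro sum_nonneg) auto
    have a: "(\<Sum>i'\<in>?I. cc^2) \<le> real d * cc^2"
      using assms(1) by (simp add: card_Diff_singleton mult_right_mono)
    have b: "2 * cc * (\<Sum>i'\<in>?I. Kr B i') \<le> 2 * cc * 6"
      using k cc_nonneg by (intro mult_left_mono) auto
    have "(\<Sum>i'\<in>?I. (Kr B i')^2) \<le> (\<Sum>i'\<in>?I. Kr B i')^2"
      using Kr_nonneg by (intro sum_sq_le)
    also have "\<dots> \<le> 6^2" using power_mono[OF k k0] .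
    finally have c: "(\<Sum>i'\<in>?I. (Kr B i')^2) \<le> 36" by simp
    show ?thesis using a b c by simp
  qed
  finally show ?thesis unfolding Ub_def by simp
qed

lemma cross:
  assumes "i < d"
  shows "(\<Sum>i'\<in>{..<d} - {i}. \<Sum>S\<in>Pow V. wt V p S * (X i S * X i' S)) \<le> p ^ 4 * Ub * n2 ^ 3"
proof -
  have "(\<Sum>i'\<in>{..<d} - {i}. \<Sum>S\<in>Pow V. wt V p S * (X i S * X i' S))
      = (\<Sum>i'\<in>{..<d} - {i}. T d (\<lambda>a b c e g h. T d (\<lambda>a' b' c' e' g' h'. p ^ card (Bw i a b c e g h \<union> Bw i' a' b' c' e' g' h'))))"
    using EXX assms by (intro sum.cong) auto
  also have "\<dots> = T d (\<lambda>a b c e g h. \<Sum>i'\<in>{..<d} - {i}. T d (\<lambda>a' b' c' e' g' h'. p ^ card (Bw i a b c e g h \<union> Bw i' a' b' c' e' g' h')))"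
    by (rule T_swap)
  also have "\<dots> \<le> T d (\<lambda>a b c e g h. p ^ 4 * Ub)"
  proof (rule T_mono)
    fix a b c e g h assume v: "validw d a b c e g h"
    have "(\<Sum>i'\<in>{..<d} - {i}. T d (\<lambda>a' b' c' e' g' h'. p ^ card (Bw i a b c e g h \<union> Bw i' a' b' c' e' g' h')))
       = (\<Sum>i'\<in>{..<d} - {i}. p ^ 4 * PS d (\<lambda>x y. R (Bw i a b c e g h) i' x * R (Bw i a b c e g h) i' y))"
      using inner_factor[OF assms _ v] by (intro sum.cong) auto
    also have "\<dots> = p ^ 4 * (\<Sum>i'\<in>{..<d} - {i}. PS d (\<lambda>x y. R (Bw i a b c e g h) i' x * R (Bw i a b c e g h) i' y))"
      by (simp add: sum_distrib_left)
    also have "\<dots> \<le> p ^ 4 * Ub"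
      using sum_root[OF assms _ Bw_card[OF assms v]] p0 by (intro mult_left_mono) (auto simp: Bw_def)
    finally show "(\<Sum>i'\<in>{..<d} - {i}. T d (\<lambda>a' b' c' e' g' h'. p ^ card (Bw i a b c e g h \<union> Bw i' a' b' c' e' g' h'))) \<le> p ^ 4 * Ub" .
  qed
  also have "\<dots> = p ^ 4 * Ub * n2 ^ 3" by (simp add: T_const n2_def)
  finally show ?thesis .
qed

end


lemma boot_mono: "i \<le> j \<Longrightarrow> boot V E A i \<subseteq> boot V E A j"
proof (induction j)
  case 0 then show ?case by simp
next
  case (Suc j)
  show ?case
  proof (cases "i = Suc j")
    case True then show ?thesis by simp
  next
    case False
    then have "boot V E A i \<subseteq> boot V E A j" using Suc by simp
    moreover have "boot V E A j \<subseteq> boot V E A (Suc j)" by (simp only: boot.simps) blast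
    ultimately show ?thesis by blast
  qed
qed

context TSp begin

lemma boot_step:
  assumes "u \<in> V" "x \<noteq> y" "E u x" "E u y" "x \<in> boot V E A k" "y \<in> boot V E A k"
  shows "u \<in> boot V E A (Suc k)"
proof -
  have fin: "finite (nbhd E u \<inter> boot V E A k)"
  proof -
    have "nbhd E u \<subseteq> V" unfolding nbhd_def using EV by blast
    then show ?thesis using finV by (meson finite_Int finite_subset)
  qed
  have "{x, y} \<subseteq> nbhd E u \<inter> boot V E A k" using assms unfolding nbhd_def by auto
  then have "card {x, y} \<le> card (nbhd E u \<inter> boot V E A k)" using fin by (rule card_mono[rotated])
  then have "2 \<le> card (nbhd E u \<inter> boot V E A k)" using assms(2) by simp
  then show ?thesis using assms(1) by (simp only: boot.simps) blast
qed

definition Y where "Y i S \<longleftrightarrow> (\<exists>j1 j2 l1 l2 l3 l4. validw d j1 j2 l1 l2 l3 l4 \<and> Bw i j1 j2 l1 l2 l3 l4 \<subseteq> S)"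

lemma Y_boot:
  assumes "i < d" "Y i S"
  shows "f [i] \<in> boot V E S 2"
proof -
  obtain j1 j2 l1 l2 l3 l4 where v: "validw d j1 j2 l1 l2 l3 l4" and sub: "Bw i j1 j2 l1 l2 l3 l4 \<subseteq> S"
    using assms(2) unfolding Y_def by auto
  have vv: "j1 < d" "j2 < d" "l1 < d" "l2 < d" "l3 < d" "l4 < d" "j1 \<noteq> j2" "l1 \<noteq> l2" "l3 \<noteq> l4"
    using v unfolding validw_def by auto
  have ds: "distinct [f [i, j1, l1], f [i, j1, l2], f [i, j2, l3], f [i, j2, l4]]"
    using Bw_distinct[OF assms(1) v] .
  have b0: "f [i, j1, l1] \<in> boot V E S 0" "f [i, j1, l2] \<in> boot V E S 0"
      "f [i, j2, l3] \<in> boot V E S 0" "f [i, j2, l4] \<in> boot V E S 0"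
    using sub unfolding Bw_def by auto
  have g1: "f [i, j1] \<in> boot V E S (Suc 0)"
    using boot_step[OF _ _ tr2(2)[OF assms(1) vv(1) vv(3)] tr2(2)[OF assms(1) vv(1) vv(4)] b0(1,2)]
      ds conjunct1[OF EV[OF tr2(2)[OF assms(1) vv(1) vv(3)]]] by simp
  have g2: "f [i, j2] \<in> boot V E S (Suc 0)"
    using boot_step[OF _ _ tr2(2)[OF assms(1) vv(2) vv(5)] tr2(2)[OF assms(1) vv(2) vv(6)] b0(3,4)]
      ds conjunct1[OF EV[OF tr2(2)[OF assms(1) vv(2) vv(5)]]] by simp
  have ne: "f [i, j1] \<noteq> f [i, j2]" using tr1(1)[OF assms(1)] vv by (auto dest: inj_onD)
  have "f [i] \<in> boot V E S (Suc (Suc 0))"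
    using boot_step[OF _ ne tr1(2)[OF assms(1) vv(1)] tr1(2)[OF assms(1) vv(2)] g1 g2]
      conjunct1[OF EV[OF tr1(2)[OF assms(1) vv(1)]]] by simp
  then show ?thesis by (simp add: numeral_2_eq_2)
qed

definition Z where "Z S = (\<Sum>i<d. of_bool (Y i S) :: real)"

lemma Z_card: "Z S = real (card {i \<in> {..<d}. Y i S})"
  unfolding Z_def by (simp add: Int_def)

lemma Z_act:
  assumes "2 \<le> Z S"
  shows "activated V E S v"
proof -
  have "2 \<le> card {i \<in> {..<d}. Y i S}" using assms unfolding Z_card by simp
  then obtain a b where ab: "a \<in> {i \<in> {..<d}. Y i S}" "b \<in> {i \<in> {..<d}. Y i S}" "a \<noteq> b"
  proof -
    assume c2: "2 \<le> card {i \<in> {..<d}. Y i S}" and th: "\<And>a b. a \<in> {i \<in> {..<d}. Y i S} \<Longrightarrow> b \<in> {i \<in> {..<d}. Y i S} \<Longrightarrow> a \<noteq> b \<Longrightarrow> thesis"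
    let ?A = "{i \<in> {..<d}. Y i S}"
    have fA: "finite ?A" by simp
    have "?A \<noteq> {}"
    proof
      assume e: "?A = {}"
      show False using c2 unfolding e by simp
    qed
    then obtain a where a: "a \<in> ?A" by blast
    have "card (?A - {a}) = card ?A - 1" using a fA by (simp add: card_Diff_singleton)
    then have "?A - {a} \<noteq> {}" using c2 by (metis One_nat_def card.empty not_less_eq_eq numeral_2_eq_2 diff_is_0_eq)
    then obtain b where b: "b \<in> ?A - {a}" by blast
    show thesis using th[of a b] a b by auto
  qed
  have a: "a < d" "Y a S" and b: "b < d" "Y b S" using ab by auto
  have ne: "f [a] \<noteq> f [b]" using tr0(1) a b ab(3) by (auto dest: inj_onD)
  have "v \<in> boot V E S (Suc 2)"
    using boot_step[OF _ ne tr0(2)[OF a(1)] tr0(2)[OF b(1)] Y_boot[OF a] Y_boot[OF b]] conjunct1[OF EV[OF tr0(2)[OF a(1)]]] by simp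
  then show ?thesis unfolding activated_def by auto
qed

lemma X_nonneg: "0 \<le> X i S" unfolding X_def by (intro T_nonneg) auto

lemma Y_le_X: "of_bool (Y i S) \<le> X i S"
proof (cases "Y i S")
  case True
  then obtain j1 j2 l1 l2 l3 l4 where v: "validw d j1 j2 l1 l2 l3 l4" and sub: "Bw i j1 j2 l1 l2 l3 l4 \<subseteq> S"
    unfolding Y_def by auto
  have "of_bool (Bw i j1 j2 l1 l2 l3 l4 \<subseteq> S) \<le> X i S"
    unfolding X_def by (rule T_ge_term[OF _ v]) auto
  then show ?thesis using True sub by simp
qed (simp add: X_nonneg)

lemma X_Y: "X i S * of_bool (Y i S) = X i S"
proof (cases "Y i S")
  case False
  then have "X i S = T d (\<lambda>a b c e g h. 0)" unfolding X_def Y_def by (intro T_cong) auto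
  then show ?thesis by (simp add: T_const)
qed simp

definition Pr where "Pr Q = (\<Sum>S\<in>Pow V. wt V p S * of_bool (Q S))"

lemma Pr_nonneg: "0 \<le> Pr Q" unfolding Pr_def using wt_nonneg[OF p0 p1] by (intro sum_nonneg) auto

lemma PY_upper: "i < d \<Longrightarrow> Pr (Y i) \<le> p ^ 4 * n2 ^ 3"
proof -
  assume i: "i < d"
  have "Pr (Y i) \<le> (\<Sum>S\<in>Pow V. wt V p S * X i S)"
    unfolding Pr_def using Y_le_X wt_nonneg[OF p0 p1] by (intro sum_mono mult_left_mono) auto
  then show ?thesis using EX[OF i] by simp
qed

lemma PY_lower:
  assumes "i < d" "0 < p ^ 4 * n2 ^ 3" "0 < Qv"
  shows "p ^ 4 * n2 ^ 3 / Qv \<le> Pr (Y i)"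
proof -
  have "(\<Sum>S\<in>Pow V. wt V p S * X i S * of_bool (Y i S))^2 \<le>
     (\<Sum>S\<in>Pow V. wt V p S * (X i S)^2) * (\<Sum>S\<in>Pow V. wt V p S * (of_bool (Y i S))^2)"
    using wt_nonneg[OF p0 p1] by (intro CS_weighted) auto
  moreover have "(\<Sum>S\<in>Pow V. wt V p S * X i S * of_bool (Y i S)) = p ^ 4 * n2 ^ 3"
  proof -
    have "(\<Sum>S\<in>Pow V. wt V p S * X i S * of_bool (Y i S)) = (\<Sum>S\<in>Pow V. wt V p S * X i S)"
      by (intro sum.cong refl) (metis X_Y mult.assoc)
    then show ?thesis using EX[OF assms(1)] by simp
  qed
  moreover have "(\<Sum>S\<in>Pow V. wt V p S * (X i S)^2) = p ^ 4 * Qv * n2 ^ 3"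
    using EX2[OF assms(1)] by (simp add: power2_eq_square)
  moreover have "(\<Sum>S\<in>Pow V. wt V p S * (of_bool (Y i S))^2) = Pr (Y i)"
    unfolding Pr_def by (intro sum.cong) auto
  ultimately have "(p ^ 4 * n2 ^ 3)^2 \<le> (p ^ 4 * n2 ^ 3) * Qv * Pr (Y i)"
    by (simp add: algebra_simps)
  then have "(p ^ 4 * n2 ^ 3) * (p ^ 4 * n2 ^ 3) \<le> (p ^ 4 * n2 ^ 3) * (Qv * Pr (Y i))"
    by (simp add: power2_eq_square algebra_simps)
  then have "p ^ 4 * n2 ^ 3 \<le> Qv * Pr (Y i)" using assms(2) by (meson mult_le_cancel_left_pos)
  then show ?thesis using assms(3) by (simp add: field_simps)
qed

end


context TSp begin

lemma EZ: "(\<Sum>S\<in>Pow V. wt V p S * Z S) = (\<Sum>i<d. Pr (Y i))"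
  unfolding Z_def Pr_def by (simp add: sum_distrib_left sum.swap[of _ "Pow V"] del: sum_mult_of_bool_eq sum_of_bool_mult_eq sum_of_bool_eq)

lemma EZ2: "(\<Sum>S\<in>Pow V. wt V p S * (Z S)^2) \<le> real d * (p ^ 4 * n2 ^ 3) + real d * (p ^ 4 * Ub * n2 ^ 3)"
proof -
  have w0: "\<And>S. 0 \<le> wt V p S" using wt_nonneg[OF p0 p1] .
  have zz: "(Z S)^2 = (\<Sum>i<d. of_bool (Y i S) + (\<Sum>i'\<in>{..<d} - {i}. of_bool (Y i S) * of_bool (Y i' S)))" for S
  proof -
    have "(Z S)^2 = (\<Sum>i<d. \<Sum>i'<d. of_bool (Y i S) * of_bool (Y i' S))"
      unfolding Z_def power2_eq_square by (simp add: sum_product del: sum_mult_of_bool_eq sum_of_bool_mult_eq sum_of_bool_eq)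
    also have "\<dots> = (\<Sum>i<d. of_bool (Y i S) + (\<Sum>i'\<in>{..<d} - {i}. of_bool (Y i S) * of_bool (Y i' S)))"
    proof (intro sum.cong refl)
      fix i assume "i \<in> {..<d}"
      then have "{..<d} = insert i ({..<d} - {i})" by auto
      then have "(\<Sum>i'<d. of_bool (Y i S) * of_bool (Y i' S) :: real) =
         of_bool (Y i S) * of_bool (Y i S) + (\<Sum>i'\<in>{..<d} - {i}. of_bool (Y i S) * of_bool (Y i' S))"
        by (metis (no_types, lifting) Diff_iff finite_Diff finite_lessThan singletonI sum.insert)
      then show "(\<Sum>i'<d. of_bool (Y i S) * of_bool (Y i' S) :: real) =
         of_bool (Y i S) + (\<Sum>i'\<in>{..<d} - {i}. of_bool (Y i S) * of_bool (Y i' S))" by simp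
    qed
    finally show ?thesis .
  qed
  have "(\<Sum>S\<in>Pow V. wt V p S * (Z S)^2) = (\<Sum>i<d. Pr (Y i) + (\<Sum>i'\<in>{..<d} - {i}. \<Sum>S\<in>Pow V. wt V p S * (of_bool (Y i S) * of_bool (Y i' S))))"
    unfolding zz Pr_def
    by (simp add: distrib_left sum_distrib_left sum.distrib sum.swap[of _ "Pow V"] del: sum_mult_of_bool_eq sum_of_bool_mult_eq sum_of_bool_eq)
  also have "\<dots> \<le> (\<Sum>i<d. p ^ 4 * n2 ^ 3 + p ^ 4 * Ub * n2 ^ 3)"
  proof (intro sum_mono add_mono)
    fix i assume i: "i \<in> {..<d}"
    show "Pr (Y i) \<le> p ^ 4 * n2 ^ 3" using PY_upper i by simp
    have "(\<Sum>i'\<in>{..<d} - {i}. \<Sum>S\<in>Pow V. wt V p S * (of_bool (Y i S) * of_bool (Y i' S)))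
       \<le> (\<Sum>i'\<in>{..<d} - {i}. \<Sum>S\<in>Pow V. wt V p S * (X i S * X i' S))"
      by (intro sum_mono mult_left_mono mult_mono Y_le_X X_nonneg w0) auto
    also have "\<dots> \<le> p ^ 4 * Ub * n2 ^ 3" using cross i by simp
    finally show "(\<Sum>i'\<in>{..<d} - {i}. \<Sum>S\<in>Pow V. wt V p S * (of_bool (Y i S) * of_bool (Y i' S))) \<le> p ^ 4 * Ub * n2 ^ 3" .
  qed
  also have "\<dots> = real d * (p ^ 4 * n2 ^ 3) + real d * (p ^ 4 * Ub * n2 ^ 3)"
    by (simp add: algebra_simps)
  finally show ?thesis .
qed

lemma Z_nat: "\<exists>k::nat. Z S = real k" unfolding Z_card by blast

lemma final_prob:
  assumes pos: "0 < p ^ 4 * n2 ^ 3" "0 < Qv"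
    and L1: "1 \<le> real d * (p ^ 4 * n2 ^ 3) / Qv"
    and main: "real d * (p ^ 4 * n2 ^ 3) * (1 + Ub) \<le> 2 * (real d * (p ^ 4 * n2 ^ 3) / Qv - 1)^2"
    and U0: "0 < real d * (p ^ 4 * n2 ^ 3) * (1 + Ub)"
  shows "1/2 \<le> prob_activated V E p v"
proof -
  let ?L = "real d * (p ^ 4 * n2 ^ 3) / Qv"
  let ?U = "real d * (p ^ 4 * n2 ^ 3) * (1 + Ub)"
  have w0: "\<And>S. 0 \<le> wt V p S" using wt_nonneg[OF p0 p1] .
  have EZl: "?L \<le> (\<Sum>S\<in>Pow V. wt V p S * Z S)"
  proof -
    have "?L = (\<Sum>i<d. p ^ 4 * n2 ^ 3 / Qv)" by simp
    also have "\<dots> \<le> (\<Sum>i<d. Pr (Y i))" using PY_lower[OF _ pos] by (intro sum_mono) auto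
    finally show ?thesis using EZ by simp
  qed
  have EZ2u: "(\<Sum>S\<in>Pow V. wt V p S * (Z S)^2) \<le> ?U"
    using EZ2 by (simp add: algebra_simps)
  define P2 where "P2 = (\<Sum>S\<in>Pow V. wt V p S * of_bool (2 \<le> Z S))"
  have pw: "Z S - 1 \<le> Z S * of_bool (2 \<le> Z S)" for S
  proof -
    obtain k :: nat where k: "Z S = real k" using Z_nat by blast
    show ?thesis
    proof (cases "2 \<le> Z S")
      case False
      then have "k \<le> 1" using k by simp
      then show ?thesis using k False by simp
    qed simp
  qed
  have "(\<Sum>S\<in>Pow V. wt V p S * Z S) - 1 = (\<Sum>S\<in>Pow V. wt V p S * (Z S - 1))"
    using sum_wt[OF finV, of p] by (simp add: algebra_simps sum_subtractf)
  also have "\<dots> \<le> (\<Sum>S\<in>Pow V. wt V p S * Z S * of_bool (2 \<le> Z S))"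
    using pw w0 by (intro sum_mono) (simp add: mult.assoc mult_left_mono del: of_bool_less_eq_iff)
  finally have A: "?L - 1 \<le> (\<Sum>S\<in>Pow V. wt V p S * Z S * of_bool (2 \<le> Z S))" using EZl by linarith
  have A0: "0 \<le> ?L - 1" using L1 by simp
  have "(?L - 1)^2 \<le> (\<Sum>S\<in>Pow V. wt V p S * Z S * of_bool (2 \<le> Z S))^2"
    using power_mono[OF A A0] .
  also have "\<dots> \<le> (\<Sum>S\<in>Pow V. wt V p S * (Z S)^2) * (\<Sum>S\<in>Pow V. wt V p S * (of_bool (2 \<le> Z S))^2)"
    using w0 by (intro CS_weighted) auto
  also have "(\<Sum>S\<in>Pow V. wt V p S * (of_bool (2 \<le> Z S))^2) = P2"
    unfolding P2_def by (intro sum.cong) auto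
  also have "(\<Sum>S\<in>Pow V. wt V p S * (Z S)^2) * P2 \<le> ?U * P2"
    using EZ2u by (rule mult_right_mono) (unfold P2_def, use w0 in \<open>intro sum_nonneg, auto\<close>)
  finally have "?U \<le> 2 * (?U * P2)" using main by linarith
  then have "?U * 1 \<le> ?U * (2 * P2)" by (simp add: algebra_simps)
  then have "1 \<le> 2 * P2" using mult_le_cancel_left_pos[OF U0] by blast
  then have "1/2 \<le> P2" by simp
  also have "P2 \<le> prob_activated V E p v"
    unfolding P2_def prob_activated_def wt_def using Z_act w0[unfolded wt_def]
    by (intro sum_mono) (auto simp del: of_bool_less_eq_iff)
  finally show ?thesis .
qed

end


lemma numeric:
  fixes D u p n2 r1 r0 Qv cc Ub :: real
  assumes u0: "0 < u" and u1: "u \<le> 1/100" and Du: "D * u^4 = 1" and pu: "p = 4 * u^7"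
  assumes n2_def: "n2 = D * (D - 1) / 2"
    and r1_def: "r1 = ((2 + (D - 2) * p)^2 - (2 + (D - 2) * p^2)) / 2"
    and r0_def: "r0 = ((D * p)^2 - D * p^2) / 2"
    and Qv_def: "Qv = ((2 * r1 + (D - 2) * r0)^2 - (2 * r1^2 + (D - 2) * r0^2)) / 2"
    and cc_def: "cc = D * (D * p)^2 / 2 + 4 * (D * p)"
    and Ub_def: "Ub = (D * cc^2 + 12 * cc + 36) / 2"
  shows "0 \<le> p" "p \<le> 1" "0 < p^4 * n2^3" "0 < Qv" "1 \<le> D * (p^4 * n2^3) / Qv"
    "D * (p^4 * n2^3) * (1 + Ub) \<le> 2 * (D * (p^4 * n2^3) / Qv - 1)^2"
    "0 < D * (p^4 * n2^3) * (1 + Ub)"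
proof -
  have u4: "u^4 \<le> (1/100)^4" using u0 u1 by (intro power_mono) auto
  have u3: "u^3 \<le> (1/100)^3" using u0 u1 by (intro power_mono) auto
  have u2: "u^2 \<le> (1/100)^2" using u0 u1 by (intro power_mono) auto
  have u7: "u^7 \<le> (1/100)^7" using u0 u1 by (intro power_mono) auto
  have u4p: "0 < u^4" using u0 by simp
  have Dge: "D \<ge> 100^4"
  proof -
    have "D * u^4 \<le> D * (1/100)^4" if "D \<ge> 0" using u4 that by (intro mult_left_mono) auto
    moreover have "D \<ge> 0"
    proof -
      have "D = 1 / u^4" using Du u4p by (simp add: field_simps)
      then show ?thesis using u4p by simp
    qed
    ultimately show ?thesis using Du by (simp add: power_divide)
  qed
  have D3: "3 \<le> D" using Dge by simp
  show p0: "0 \<le> p" using pu u0 by simp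
  show p1: "p \<le> 1" using pu u7 by (simp add: power_divide)
  have e: "D * p = 4 * u^3"
  proof -
    have "D * p = 4 * u^3 * (D * u^4)" unfolding pu by algebra
    then show ?thesis using Du by simp
  qed
  have e1: "D * p \<le> 4 / 100^3" using e u3 by (simp add: power_divide)
  have e0: "0 \<le> D * p" using e u0 by simp
  have A: "D * (D * p)^2 / 2 = 8 * u^2"
  proof -
    have "D * (D * p)^2 / 2 = 8 * u^2 * (D * u^4)" unfolding e by algebra
    then show ?thesis using Du by simp
  qed
  have cce: "cc = 8 * u^2 + 16 * u^3" unfolding cc_def by (subst A) (simp add: e)
  have cc1: "cc \<le> 1/1000" using u2 u3 unfolding cce by (simp add: power_divide)
  have cc0: "0 \<le> cc" unfolding cce using u0 by simp
  have Dcc: "D * cc^2 = (8 + 16 * u)^2"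
  proof -
    have "D * cc^2 = (D * u^4) * (8 + 16 * u)^2" unfolding cce by algebra
    then show ?thesis using Du by simp
  qed
  have Dcc1: "D * cc^2 \<le> (8 + 16/100)^2" unfolding Dcc using u0 u1 by (intro power_mono) auto
  have dP1: "D * (p^4 * n2^3) = 32 * (1 - u^4)^3"
  proof -
    have "D * (p^4 * n2^3) = (D * p)^4 * (D - 1)^3 / 8" unfolding n2_def by (simp add: power_divide power_mult_distrib mult_ac power_Suc[symmetric] del: power_Suc)
    also have "\<dots> = 256 * u^12 * (D - 1)^3 / 8" unfolding e by algebra
    also have "\<dots> = 32 * (u^4 * (D - 1))^3" by algebra
    also have "u^4 * (D - 1) = 1 - u^4" using Du by (simp add: algebra_simps)
    finally show ?thesis .
  qed
  have w1: "1 - u^4 \<ge> 1 - 1/100^4" using u4 by (simp add: power_divide)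
  have w0: "0 \<le> 1 - 1/(100::real)^4" by simp
  have dP1l: "D * (p^4 * n2^3) \<ge> 32 * (1 - 1/100^4)^3"
    unfolding dP1 using power_mono[OF w1 w0, of 3] by simp
  have dP1u: "D * (p^4 * n2^3) \<le> 32"
  proof -
    have "(1 - u^4)^3 \<le> 1" using u4 u4p by (intro power_le_one) (auto simp: power_divide)
    then show ?thesis unfolding dP1 by simp
  qed
  have dP1p: "0 < D * (p^4 * n2^3)" 
  proof -
    have "0 < 32 * (1 - 1/100^4::real)^3" by simp
    then show ?thesis using dP1l by linarith
  qed
  show "0 < p^4 * n2^3" using dP1p D3 by (simp add: zero_less_mult_iff)
  define a where "a = (D - 2) * p"
  define b where "b = (D - 2) * p^2"
  have a0: "0 \<le> a" unfolding a_def using D3 p0 by simp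
  have a1: "a \<le> D * p" unfolding a_def using p0 by (simp add: algebra_simps)
  have b0: "0 \<le> b" unfolding b_def using D3 by simp
  have ba: "b \<le> a" unfolding a_def b_def using p0 p1 D3 by (simp add: power2_eq_square mult_left_le)
  have r1e: "r1 = 1 + 2 * a + a^2 / 2 - b / 2" unfolding r1_def a_def[symmetric] b_def[symmetric] by (simp add: power2_eq_square field_simps)
  have r1l: "1 \<le> r1" unfolding r1e using a0 ba zero_le_power2[of a] by linarith
  have a2: "a^2 \<le> (4 / 100^3)^2" using a0 a1 e1 by (intro power_mono) auto
  have r1u: "r1 \<le> 1 + 2 * (4/100^3) + (4/100^3)^2 / 2" unfolding r1e using a1 e1 a2 b0 by simp
  define x where "x = (D - 2) * r0"
  define y where "y = (D - 2) * r0^2"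
  have r00: "0 \<le> r0"
  proof -
    have "p * p \<le> p * (D * p)" using D3 p0 by (intro mult_left_mono) (auto simp: mult_le_cancel_right1)
    then have "D * p^2 \<le> (D * p)^2" using D3 p0 by (simp add: power2_eq_square mult_ac)
    then show ?thesis unfolding r0_def by simp
  qed
  have x0: "0 \<le> x" unfolding x_def using D3 r00 by simp
  have xu: "x \<le> 8 / 100^2"
  proof -
    have "x \<le> D * r0" unfolding x_def using r00 by (simp add: algebra_simps)
    also have "\<dots> \<le> D * (D * p)^2 / 2" unfolding r0_def using D3 p0 by (simp add: field_simps)
    also have "\<dots> \<le> 8 / 100^2" unfolding A using u2 by (simp add: power_divide)
    finally show ?thesis .
  qed
  have y0: "0 \<le> y" unfolding y_def using D3 by simp
  have yx: "y \<le> x^2"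
  proof -
    have "(D - 2) * r0^2 \<le> (D - 2)^2 * r0^2" using D3 by (intro mult_right_mono) (auto simp: power2_eq_square)
    then show ?thesis unfolding x_def y_def by (simp add: power_mult_distrib)
  qed
  have Qe: "Qv = r1^2 + 2 * r1 * x + (x^2 - y) / 2" unfolding Qv_def x_def[symmetric] y_def[symmetric] by (simp add: power2_eq_square field_simps)
  have Ql: "1 \<le> Qv"
  proof -
    have h1: "1 \<le> r1^2" using r1l by (simp add: one_le_power)
    have h2: "0 \<le> 2 * r1 * x" using r1l x0 by simp
    have h3: "0 \<le> (x^2 - y) / 2" using yx by simp
    show ?thesis unfolding Qe using add_mono[OF add_mono[OF h1 h2] h3] by simp
  qed
  show Qp: "0 < Qv" using Ql by simp
  have Qu: "Qv \<le> 1002 / 1000"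
  proof -
    let ?R = "1 + 2 * (4/100^3) + (4/100^3)^2 / (2::real)"
    have h1: "r1^2 \<le> ?R^2" using r1l r1u by (intro power_mono) auto
    have h2: "2 * r1 * x \<le> 2 * ?R * (8 / 100^2)" using r1u xu r1l x0 by (intro mult_mono) auto
    have "x^2 \<le> (8 / 100^2)^2" using x0 xu by (intro power_mono) auto
    then have h3: "(x^2 - y) / 2 \<le> (8 / 100^2)^2 / 2" using y0 by simp
    have "Qv \<le> ?R^2 + 2 * ?R * (8 / 100^2) + (8 / 100^2)^2 / 2" unfolding Qe using add_mono[OF add_mono[OF h1 h2] h3] .
    also have "\<dots> \<le> 1002 / 1000" by (simp add: power2_eq_square power_divide)
    finally show ?thesis .
  qed
  have Ll: "31 + 9/10 \<le> D * (p^4 * n2^3) / Qv"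
  proof -
    have "(31 + 9/10) * Qv \<le> (31 + 9/10) * (1002/1000)" using Qu by simp
    also have "\<dots> \<le> 32 * (1 - 1/100^4)^3" by (simp add: power3_eq_cube power_divide)
    also have "\<dots> \<le> D * (p^4 * n2^3)" by (rule dP1l)
    finally show ?thesis using Qp by (simp add: field_simps)
  qed
  show "1 \<le> D * (p^4 * n2^3) / Qv" using Ll by linarith
  have Ubu: "Ub \<le> ((8 + 16/100)^2 + 12 / 1000 + 36) / 2" unfolding Ub_def using Dcc1 cc1 by simp
  have Ub0: "0 \<le> Ub" unfolding Ub_def using cc0 D3 by simp
  have "D * (p^4 * n2^3) * (1 + Ub) \<le> 32 * (1 + ((8 + 16/100)^2 + 12 / 1000 + 36) / 2)"
    using dP1u Ubu Ub0 dP1p by (intro mult_mono) auto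
  also have "\<dots> \<le> 2 * (30 + 9/10)^2" by (simp add: power2_eq_square)
  also have "\<dots> \<le> 2 * (D * (p^4 * n2^3) / Qv - 1)^2"
    using Ll by (intro mult_left_mono power_mono) auto
  finally show "D * (p^4 * n2^3) * (1 + Ub) \<le> 2 * (D * (p^4 * n2^3) / Qv - 1)^2" .
  show "0 < D * (p^4 * n2^3) * (1 + Ub)" using dP1p Ub0 by simp
qed


theorem lemma6:
  shows "\<exists>d0::nat. \<forall>d\<ge>d0. \<forall>V E v f.
     fin_graph V E \<and> (\<forall>u\<in>V. card (nbhd E u) \<ge> d + 1) \<and> v \<in> V \<and>
     dk_tree E d 3 v f \<and> four_proper d 3 f \<longrightarrow>
     prob_activated V E (4 * real d powr (-7/4)) v \<ge> 1/2"
proof (intro exI[of _ "100^4"] allI impI)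
  fix d :: nat and V E v f
  assume dge: "100^4 \<le> d"
  assume H: "fin_graph V E \<and> (\<forall>u\<in>V. card (nbhd E u) \<ge> d + 1) \<and> v \<in> V \<and>
     dk_tree E d 3 v f \<and> four_proper d 3 f"
  define D where "D = real d"
  define t where "t = D powr (1/4)"
  define p where "p = 4 * real d powr (-7/4)"
  have D0: "0 < D" unfolding D_def using dge by simp
  have Dge: "100^4 \<le> D" unfolding D_def using dge
    by (metis of_nat_le_iff of_nat_numeral of_nat_power)
  have t0: "0 < t" unfolding t_def using D0 by simp
  have t4: "t^4 = D"
  proof -
    have "t^4 = t powr (real 4)" using t0 by (simp add: powr_realpow)
    also have "\<dots> = D" unfolding t_def using D0 by (simp add: powr_powr)
    finally show ?thesis .
  qed
  have t100: "100 \<le> t"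
  proof (rule ccontr)
    assume "\<not> 100 \<le> t"
    then have "t^4 < 100^4" using t0 by (intro power_strict_mono) auto
    then show False using t4 Dge by simp
  qed
  define u where "u = 1 / t"
  have u0: "0 < u" unfolding u_def using t0 by simp
  have u1: "u \<le> 1/100" unfolding u_def using t100 t0 by (simp add: field_simps)
  have Du: "D * u^4 = 1" unfolding u_def using t4 t0 D0 by (simp add: power_divide)
  have pu: "p = 4 * u^7"
  proof -
    have "real d powr (-7/4) = (D powr (1/4)) powr (-7)" unfolding D_def using D0 by (simp add: powr_powr D_def)
    also have "\<dots> = inverse (t powr (real 7))" unfolding t_def by (simp add: powr_minus)
    also have "\<dots> = inverse (t^7)" using t0 by (simp add: powr_realpow)
    also have "\<dots> = u^7" unfolding u_def by (simp add: power_divide inverse_eq_divide)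
    finally show ?thesis unfolding p_def by simp
  qed
  have d2: "real (d - 2) = D - 2" unfolding D_def using dge by (simp add: of_nat_diff)
  note num = numeric[OF u0 u1 Du pu refl refl refl refl refl refl]
  interpret TSp V E d v f p
    using H num(1,2) by unfold_locales auto
  have e1: "n2 = D * (D - 1) / 2" unfolding n2_def D_def ..
  have e2: "r1 = ((2 + (D - 2) * p)^2 - (2 + (D - 2) * p^2)) / 2" unfolding r1_def d2 ..
  have e3: "r0 = ((D * p)^2 - D * p^2) / 2" unfolding r0_def D_def ..
  have e4: "Qv = ((2 * r1 + (D - 2) * r0)^2 - (2 * r1^2 + (D - 2) * r0^2)) / 2" unfolding Qv_def d2 ..
  have e5: "cc = D * (D * p)^2 / 2 + 4 * (D * p)" unfolding cc_def D_def ..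
  have e6: "Ub = (D * cc^2 + 12 * cc + 36) / 2" unfolding Ub_def D_def ..
  note nn = numeric[OF u0 u1 Du pu e1 e2 e3 e4 e5 e6]
  have "1/2 \<le> prob_activated V E p v"
    by (rule final_prob) (use nn in \<open>simp_all add: D_def\<close>)
  then show "1/2 \<le> prob_activated V E (4 * real d powr (-7/4)) v" unfolding p_def .
qed

end
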